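(* For every finite simple undirected graph $G$, $\chi_{pcf}(G)\leq 2\,\mathrm{scol}_{2}(G)-1$.
   Context: All graphs are finite, simple and undirected. For a graph $G$, a $c$-colouring is a function $\psi:V(G)\to C$ with $|C|\le c$; it is proper if $\psi(u)\neq\psi(v)$ for every edge $uv$. With $N(v)=\{w: vw\in E(G)\}$, a colouring $\psi$ is conflict-free if for every vertex $v$ with $|N(v)|>0$ there is a colour $\alpha$ such that exactly one $w\in N(v)$ has $\psi(w)=\alpha$. The proper conflict-free chromatic number $\chi_{pcf}(G)$ is the minimum $c$ such that $G$ has a proper conflict-free $c$-colouring. For a total order $\preceq$ of $V(G)$, a vertex $v$ and an integer $s\ge1$, let $R(G,\preceq,v,s)$ be the set of vertices $w$ such that $w\preceq v$ and there is a path $v=w_0,w_1,\dots,w_{s'}=w$ of length $s'\in\{0,1,\dots,s\}$ with $v\prec w_i$ for all $i\in\{1,\dots,s'-1\}$. The $s$-strong colouring number $\mathrm{scol}_s(G)$ is the minimum integer $c$ such that there is a total order $\preceq$ of $V(G)$ with $|R(G,\preceq,v,s)|\le c$ for every vertex $v$. *)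

theory Defs
  imports Main
begin

definition simple_graph :: "'a set \<Rightarrow> ('a \<Rightarrow> 'a \<Rightarrow> bool) \<Rightarrow> bool" where
  "simple_graph V E \<longleftrightarrow> finite V \<and> (\<forall>u v. E u v \<longrightarrow> u \<in> V \<and> v \<in> V)
     \<and> (\<forall>u v. E u v \<longrightarrow> E v u) \<and> (\<forall>v. \<not> E v v)"

definition nbhd :: "'a set \<Rightarrow> ('a \<Rightarrow> 'a \<Rightarrow> bool) \<Rightarrow> 'a \<Rightarrow> 'a set" where
  "nbhd V E v = {w \<in> V. E v w}"

definition pcf_colouring :: "'a set \<Rightarrow> ('a \<Rightarrow> 'a \<Rightarrow> bool) \<Rightarrow> nat \<Rightarrow> ('a \<Rightarrow> nat) \<Rightarrow> bool" where
  "pcf_colouring V E c \<psi> \<longleftrightarrow>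
     card (\<psi> ` V) \<le> c
     \<and> (\<forall>u\<in>V. \<forall>v\<in>V. E u v \<longrightarrow> \<psi> u \<noteq> \<psi> v)
     \<and> (\<forall>v\<in>V. nbhd V E v \<noteq> {} \<longrightarrow> (\<exists>\<alpha>. card {w \<in> nbhd V E v. \<psi> w = \<alpha>} = 1))"

definition chi_pcf :: "'a set \<Rightarrow> ('a \<Rightarrow> 'a \<Rightarrow> bool) \<Rightarrow> nat" where
  "chi_pcf V E = (LEAST c. \<exists>\<psi>. pcf_colouring V E c \<psi>)"

text \<open>A path in (V,E) given as a list of distinct vertices, consecutive ones adjacent;
its length is (length ps - 1).\<close>
definition is_path :: "'a set \<Rightarrow> ('a \<Rightarrow> 'a \<Rightarrow> bool) \<Rightarrow> 'a list \<Rightarrow> bool" where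
  "is_path V E ps \<longleftrightarrow> ps \<noteq> [] \<and> set ps \<subseteq> V \<and> distinct ps
     \<and> (\<forall>i. Suc i < length ps \<longrightarrow> E (ps ! i) (ps ! Suc i))"

text \<open>R(G, order r, v, s); the total order is a relation r with (x,y) \<in> r meaning x \<preceq> y.\<close>
definition reach_set :: "'a set \<Rightarrow> ('a \<Rightarrow> 'a \<Rightarrow> bool) \<Rightarrow> 'a rel \<Rightarrow> 'a \<Rightarrow> nat \<Rightarrow> 'a set" where
  "reach_set V E r v s = {w \<in> V. (w, v) \<in> r \<and>
     (\<exists>ps. is_path V E ps \<and> hd ps = v \<and> last ps = w \<and> length ps - 1 \<le> s
        \<and> (\<forall>i. 0 < i \<and> i < length ps - 1 \<longrightarrow> (v, ps ! i) \<in> r \<and> ps ! i \<noteq> v))}"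

definition scol :: "nat \<Rightarrow> 'a set \<Rightarrow> ('a \<Rightarrow> 'a \<Rightarrow> bool) \<Rightarrow> nat" where
  "scol s V E = (LEAST c. \<exists>r. linear_order_on V r \<and> (\<forall>v\<in>V. card (reach_set V E r v s) \<le> c))"

end

theory Submission
  imports Defs
begin

lemma greedy:
  fixes f :: "'a \<Rightarrow> nat" and C :: "'a \<Rightarrow> 'a \<Rightarrow> bool"
  assumes "finite S"
  shows "(\<forall>x\<in>S. card {y\<in>S. f y < f x \<and> C x y} \<le> d) \<longrightarrow>
    (\<exists>\<psi>. (\<forall>x\<in>S. \<psi> x \<le> d) \<and> (\<forall>x\<in>S. \<forall>y\<in>S. f y < f x \<and> C x y \<longrightarrow> \<psi> x \<noteq> \<psi> y))"
  using assms
proof (induction S rule: finite_ranking_induct[where f = f])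
  case empty
  then show ?case by auto
next
  case (insert x S)
  show ?case
  proof
    assume H: "\<forall>z\<in>insert x S. card {y\<in>insert x S. f y < f z \<and> C z y} \<le> d"
    show "\<exists>\<psi>. (\<forall>z\<in>insert x S. \<psi> z \<le> d) \<and> (\<forall>z\<in>insert x S. \<forall>y\<in>insert x S. f y < f z \<and> C z y \<longrightarrow> \<psi> z \<noteq> \<psi> y)"
    proof (cases "x \<in> S")
      case True
      then show ?thesis using H insert(3) by (simp add: insert_absorb)
    next
      case False
      have "\<forall>z\<in>S. card {y\<in>S. f y < f z \<and> C z y} \<le> d"
      proof
        fix z assume "z \<in> S"
        have "card {y\<in>S. f y < f z \<and> C z y} \<le> card {y\<in>insert x S. f y < f z \<and> C z y}"
          by (rule card_mono) (use insert(1) in auto)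
        then show "card {y\<in>S. f y < f z \<and> C z y} \<le> d" using H \<open>z \<in> S\<close> by auto
      qed
      then obtain \<psi> where p1: "\<forall>z\<in>S. \<psi> z \<le> d"
        and p2: "\<forall>z\<in>S. \<forall>y\<in>S. f y < f z \<and> C z y \<longrightarrow> \<psi> z \<noteq> \<psi> y"
        using insert(3) by blast
      let ?K = "{y\<in>insert x S. f y < f x \<and> C x y}"
      have "card ?K \<le> d" using H by blast
      moreover have "finite ?K" using insert(1) by auto
      ultimately have "card (\<psi> ` ?K) \<le> d"
        using card_image_le[of ?K \<psi>] by linarith
      then have "card (\<psi> ` ?K) < card {0..d}" by simp
      then obtain c where c: "c \<in> {0..d}" "c \<notin> \<psi> ` ?K"
      proof -
        have "\<not> {0..d} \<subseteq> \<psi> ` ?K"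
          using card_mono[of "\<psi> ` ?K" "{0..d}"] \<open>finite ?K\<close> \<open>card (\<psi> ` ?K) < card {0..d}\<close> by auto
        then show ?thesis using that by blast
      qed
      show ?thesis
      proof (intro exI[of _ "\<psi>(x := c)"] conjI ballI impI)
        fix z assume "z \<in> insert x S" then show "(\<psi>(x := c)) z \<le> d" using p1 c by auto
      next
        fix z y assume z: "z \<in> insert x S" and y: "y \<in> insert x S" and zy: "f y < f z \<and> C z y"
        show "(\<psi>(x := c)) z \<noteq> (\<psi>(x := c)) y"
        proof (cases "z = x")
          case True
          then have "y \<noteq> x" using zy by auto
          then show ?thesis using True c y zy by auto
        next
          case False
          then have zS: "z \<in> S" using z by auto
          have "y \<noteq> x" using insert(2)[OF zS] zy by auto
          then show ?thesis using False zS y p2 zy by auto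
        qed
      qed
    qed
  qed
qed


lemma rank_mono:
  assumes lo: "linear_order_on V r" and fin: "finite V"
    and x: "x \<in> V" and y: "y \<in> V" and xy: "(x, y) \<in> r" "x \<noteq> y"
  shows "card {z\<in>V. (z, x) \<in> r \<and> z \<noteq> x} < card {z\<in>V. (z, y) \<in> r \<and> z \<noteq> y}"
proof (rule psubset_card_mono)
  show "finite {z\<in>V. (z, y) \<in> r \<and> z \<noteq> y}" using fin by auto
  have tr: "trans r" and an: "antisym r"
    using lo unfolding linear_order_on_def partial_order_on_def preorder_on_def by auto
  have "{z\<in>V. (z, x) \<in> r \<and> z \<noteq> x} \<subseteq> {z\<in>V. (z, y) \<in> r \<and> z \<noteq> y}"
  proof
    fix z assume z: "z \<in> {z\<in>V. (z, x) \<in> r \<and> z \<noteq> x}"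
    then have "(z, y) \<in> r" using tr xy unfolding trans_def by blast
    moreover have "z \<noteq> y"
    proof
      assume "z = y"
      then have "(y, x) \<in> r" using z by auto
      then show False using an xy unfolding antisym_def by blast
    qed
    ultimately show "z \<in> {z\<in>V. (z, y) \<in> r \<and> z \<noteq> y}" using z by auto
  qed
  moreover have "x \<in> {z\<in>V. (z, y) \<in> r \<and> z \<noteq> y}" "x \<notin> {z\<in>V. (z, x) \<in> r \<and> z \<noteq> x}"
    using x xy by auto
  ultimately show "{z\<in>V. (z, x) \<in> r \<and> z \<noteq> x} \<subset> {z\<in>V. (z, y) \<in> r \<and> z \<noteq> y}" by blast
qed

theorem theorem1:
  fixes V :: "'a set" and E :: "'a \<Rightarrow> 'a \<Rightarrow> bool"
  assumes "simple_graph V E"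
  shows "chi_pcf V E \<le> 2 * scol 2 V E - 1"
proof -
  have fin: "finite V" and EV: "\<And>u v. E u v \<Longrightarrow> u \<in> V \<and> v \<in> V"
    and Esym: "\<And>u v. E u v \<Longrightarrow> E v u" and Eirr: "\<And>v. \<not> E v v"
    using assms unfolding simple_graph_def by auto
  define k where "k = scol 2 V E"
  have ex0: "\<exists>r. linear_order_on V r \<and> (\<forall>v\<in>V. card (reach_set V E r v 2) \<le> card V)"
  proof -
    obtain r where "well_order_on V r" using well_order_on by blast
    then have "linear_order_on V r" unfolding well_order_on_def by auto
    moreover have "\<forall>v\<in>V. card (reach_set V E r v 2) \<le> card V"
      using fin by (auto intro!: card_mono simp: reach_set_def)
    ultimately show ?thesis by blast
  qed
  have ex: "\<exists>c. \<exists>r. linear_order_on V r \<and> (\<forall>v\<in>V. card (reach_set V E r v 2) \<le> c)"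
    using ex0 by blast
  obtain r where lo: "linear_order_on V r" and rk: "\<forall>v\<in>V. card (reach_set V E r v 2) \<le> k"
    using LeastI_ex[OF ex] unfolding k_def scol_def by blast
  have refl: "\<And>x. x \<in> V \<Longrightarrow> (x, x) \<in> r" and tot: "total_on V r"
    using lo unfolding linear_order_on_def partial_order_on_def preorder_on_def refl_on_def by auto
  have rV: "\<And>x y. (x, y) \<in> r \<Longrightarrow> x \<in> V \<and> y \<in> V"
    using lo unfolding linear_order_on_def partial_order_on_def preorder_on_def by auto
  define f where "f x = card {z\<in>V. (z, x) \<in> r \<and> z \<noteq> x}" for x
  have fmono: "\<And>x y. x \<in> V \<Longrightarrow> y \<in> V \<Longrightarrow> (x, y) \<in> r \<Longrightarrow> x \<noteq> y \<Longrightarrow> f x < f y"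
    unfolding f_def using rank_mono[OF lo fin] by blast
  have flt: "\<And>x y. x \<in> V \<Longrightarrow> y \<in> V \<Longrightarrow> f y < f x \<Longrightarrow> (y, x) \<in> r \<and> y \<noteq> x"
  proof -
    fix x y assume "x \<in> V" "y \<in> V" "f y < f x"
    then show "(y, x) \<in> r \<and> y \<noteq> x"
      using tot fmono[of x y] unfolding total_on_def by fastforce
  qed
  have finj: "\<And>x y. x \<in> V \<Longrightarrow> y \<in> V \<Longrightarrow> x \<noteq> y \<Longrightarrow> f x \<noteq> f y"
    using tot fmono unfolding total_on_def by (metis less_irrefl)
  define m where "m v = (SOME u. E v u \<and> (\<forall>w. E v w \<longrightarrow> f u \<le> f w))" for v
  have mprop: "E v (m v) \<and> (\<forall>w. E v w \<longrightarrow> f (m v) \<le> f w)" if "E v w0" for v w0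
  proof -
    have "\<exists>u. E v u \<and> (\<forall>w. E v w \<longrightarrow> f u \<le> f w)"
      using ex_has_least_nat[of "E v" w0 f] that by blast
    then show ?thesis unfolding m_def by (rule someI_ex)
  qed
  define C where "C x y = (E x y \<or> (\<exists>v. E v x \<and> E v y \<and> y = m v))" for x y
  define d where "d = 2 * k - 2"
  have bound: "\<forall>x\<in>V. card {y\<in>V. f y < f x \<and> C x y} \<le> d"
  proof
    fix x assume x: "x \<in> V"
    define A where "A = reach_set V E r x 2 - {x}"
    define B where "B = {v\<in>V. E x v \<and> (v, x) \<in> r \<and> v \<noteq> x}"
    have xR: "x \<in> reach_set V E r x 2"
      unfolding reach_set_def using x refl[OF x]
      by (auto intro!: exI[of _ "[x]"] simp: is_path_def)
    have finA: "finite A" unfolding A_def reach_set_def using fin by auto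
    have cardA: "card A \<le> k - 1"
      unfolding A_def using rk x xR fin
      by (metis (no_types, lifting) card_Diff_singleton diff_le_mono)
    have BA: "B \<subseteq> A"
    proof
      fix v assume v: "v \<in> B"
      have "is_path V E [x, v]" using v x unfolding B_def is_path_def
        by (auto simp: less_Suc_eq)
      then show "v \<in> A" using v unfolding A_def B_def reach_set_def
        by (auto intro!: exI[of _ "[x, v]"])
    qed
    have sub: "{y\<in>V. f y < f x \<and> C x y} \<subseteq> A \<union> m ` B"
    proof
      fix y assume y: "y \<in> {y\<in>V. f y < f x \<and> C x y}"
      then have yV: "y \<in> V" and yx: "(y, x) \<in> r" "y \<noteq> x" and Cxy: "C x y"
        using flt[OF x] by auto
      show "y \<in> A \<union> m ` B"
      proof (cases "E x y")
        case True
        have "is_path V E [x, y]" using True x yV yx unfolding is_path_def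
          by (auto simp: less_Suc_eq)
        then have "y \<in> A" using yV yx unfolding A_def reach_set_def
          by (auto intro!: exI[of _ "[x, y]"])
        then show ?thesis by blast
      next
        case False
        then obtain v where v: "E v x" "E v y" "y = m v" using Cxy unfolding C_def by blast
        have vV: "v \<in> V" using EV v by blast
        have vx: "v \<noteq> x" using v Eirr by blast
        show ?thesis
        proof (cases "(v, x) \<in> r")
          case True
          then have "v \<in> B" using vV vx v Esym unfolding B_def by blast
          then show ?thesis using v by blast
        next
          case False
          then have xv: "(x, v) \<in> r" using tot vV x vx unfolding total_on_def by blast
          have vy: "v \<noteq> y" using v Eirr by blast
          have Exv: "E x v" using v Esym by blast
          have P: "is_path V E [x, v, y]" unfolding is_path_def
          proof (intro conjI allI impI)
            show "set [x, v, y] \<subseteq> V" using x vV yV by simp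
            show "distinct [x, v, y]" using vx vy yx by auto
            fix i assume "Suc i < length [x, v, y]"
            then have "i = 0 \<or> i = 1" by auto
            then show "E ([x, v, y] ! i) ([x, v, y] ! Suc i)" using Exv v by auto
          qed simp
          have "\<forall>i. 0 < i \<and> i < length [x, v, y] - 1 \<longrightarrow> (x, [x, v, y] ! i) \<in> r \<and> [x, v, y] ! i \<noteq> x"
            using xv vx by (auto simp: less_Suc_eq)
          then have "y \<in> A" using yV yx P unfolding A_def reach_set_def
            by (auto intro!: exI[of _ "[x, v, y]"])
          then show ?thesis by blast
        qed
      qed
    qed
    have "card {y\<in>V. f y < f x \<and> C x y} \<le> card (A \<union> m ` B)"
      using sub finA BA by (intro card_mono) (auto intro: finite_subset)
    also have "\<dots> \<le> card A + card (m ` B)" by (rule card_Un_le)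
    also have "\<dots> \<le> card A + card B" using card_image_le[of B m] finA BA finite_subset by auto
    also have "\<dots> \<le> card A + card A" using card_mono[OF finA BA] by simp
    also have "\<dots> \<le> d" using cardA unfolding d_def by simp
    finally show "card {y\<in>V. f y < f x \<and> C x y} \<le> d" .
  qed
  obtain \<psi> where p1: "\<forall>x\<in>V. \<psi> x \<le> d"
    and p2: "\<forall>x\<in>V. \<forall>y\<in>V. f y < f x \<and> C x y \<longrightarrow> \<psi> x \<noteq> \<psi> y"
    using greedy[OF fin, of f C d] bound by blast
  have "\<exists>\<psi>. pcf_colouring V E (2 * k - 1) \<psi>"
  proof (cases "V = {}")
    case True
    then show ?thesis unfolding pcf_colouring_def by simp
  next
    case False
    then obtain x where x: "x \<in> V" by blast
    have xR: "x \<in> reach_set V E r x 2"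
      unfolding reach_set_def using x refl[OF x]
      by (auto intro!: exI[of _ "[x]"] simp: is_path_def)
    have "card (reach_set V E r x 2) \<ge> 1"
      using xR fin unfolding reach_set_def
      by (metis (no_types, lifting) One_nat_def Suc_leI card_gt_0_iff empty_iff finite_subset mem_Collect_eq subsetI)
    then have k1: "k \<ge> 1" using rk x by fastforce
    have c1: "card (\<psi> ` V) \<le> 2 * k - 1"
    proof -
      have "card (\<psi> ` V) \<le> card {0..d}" using p1 by (intro card_mono) auto
      then show ?thesis using k1 unfolding d_def by simp
    qed
    have c2: "\<forall>u\<in>V. \<forall>v\<in>V. E u v \<longrightarrow> \<psi> u \<noteq> \<psi> v"
    proof (intro ballI impI)
      fix u v assume u: "u \<in> V" and v: "v \<in> V" and uv: "E u v"
      have "u \<noteq> v" using uv Eirr by blast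
      then have "f u \<noteq> f v" using finj u v by blast
      then show "\<psi> u \<noteq> \<psi> v"
      proof (cases "f v < f u")
        case True then show ?thesis using p2 u v uv unfolding C_def by blast
      next
        case False
        then have "f u < f v" using \<open>f u \<noteq> f v\<close> by simp
        then show ?thesis using p2 u v uv Esym unfolding C_def by metis
      qed
    qed
    have c3: "\<forall>v\<in>V. nbhd V E v \<noteq> {} \<longrightarrow> (\<exists>\<alpha>. card {w \<in> nbhd V E v. \<psi> w = \<alpha>} = 1)"
    proof (intro ballI impI)
      fix v assume v: "v \<in> V" and ne: "nbhd V E v \<noteq> {}"
      then obtain w0 where w0: "E v w0" unfolding nbhd_def by blast
      note mp = mprop[OF w0]
      have mV: "m v \<in> V" using mp EV by blast
      have "{w \<in> nbhd V E v. \<psi> w = \<psi> (m v)} = {m v}"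
      proof (rule set_eqI, rule iffI)
        fix w assume w: "w \<in> {w \<in> nbhd V E v. \<psi> w = \<psi> (m v)}"
        then have wV: "w \<in> V" and vw: "E v w" and eq: "\<psi> w = \<psi> (m v)" unfolding nbhd_def by auto
        show "w \<in> {m v}"
        proof (rule ccontr)
          assume "w \<notin> {m v}"
          then have "w \<noteq> m v" by simp
          then have "f (m v) < f w" using mp vw finj[OF wV mV] by fastforce
          moreover have "C w (m v)" unfolding C_def using vw mp by blast
          ultimately show False using p2 wV mV eq by blast
        qed
      next
        fix w assume "w \<in> {m v}"
        then show "w \<in> {w \<in> nbhd V E v. \<psi> w = \<psi> (m v)}" using mp mV unfolding nbhd_def by auto
      qed
      then have "card {w \<in> nbhd V E v. \<psi> w = \<psi> (m v)} = 1" by simp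
      then show "\<exists>\<alpha>. card {w \<in> nbhd V E v. \<psi> w = \<alpha>} = 1" by blast
    qed
    show ?thesis using c1 c2 c3 unfolding pcf_colouring_def by blast
  qed
  then show ?thesis unfolding chi_pcf_def k_def[symmetric] by (rule Least_le)
qed

end
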